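(* Let $(Y,\rho)$ be a metric space, let $\hookrightarrow_*$ be a monotone embedding relation on the subsets of $Y$, let $X$ be a paracompact space, and let $\varphi:X\rightrightarrows Y$ be a $\rho$-continuous set-valued mapping such that each $\varphi(x)$, $x\in X$, is uniformly $UV^*$. Then for every continuous function $\varepsilon:X\to(0,+\infty)$ there exist a sequence $\mathscr{U}_n$, $n<\omega$, of open covers of $X$ and set-valued mappings $\Phi_n,\Psi_n:\mathscr{U}_n\rightrightarrows Y$ such that for every $n<\omega$ and every $U\in\mathscr{U}_n$: (i) $\Phi_n(U)\hookrightarrow_*\Psi_n(U)\subset \mathbf{O}_{\varepsilon(p)}(\varphi(p))$ for every $p\in U$; (ii) $\Psi_k(V)\subset\Phi_n(U)$ whenever $k>n$ and $V\in\mathscr{U}_k$ with $V\cap U\neq\emptyset$.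
   Context: All covers consist of nonempty sets. A set-valued mapping $\varphi:X\rightrightarrows Y$ assigns to each $x\in X$ a nonempty subset $\varphi(x)\subset Y$. For a metric space $(Y,\rho)$, $\mathbf{O}_\varepsilon(y)$ is the open $\varepsilon$-ball about $y$ and $\mathbf{O}_\varepsilon(S)=\bigcup_{q\in S}\mathbf{O}_\varepsilon(q)$ for $S\subset Y$. A mapping $\varphi:X\rightrightarrows Y$ is $\rho$-continuous if for every $\varepsilon>0$ each $x\in X$ has a neighbourhood $V$ with $\varphi(x)\subset\mathbf{O}_\varepsilon(\varphi(p))$ and $\varphi(p)\subset\mathbf{O}_\varepsilon(\varphi(x))$ for all $p\in V$. An embedding relation $\hookrightarrow_*$ on subsets of $Y$ is a relation $S\hookrightarrow_* T$ between subsets with $S\hookrightarrow_*T$ implying $S\subset T$; it is monotone if $A\subset S\hookrightarrow_* T\subset B$ implies $A\hookrightarrow_* B$. A subset $S\subset Y$ is uniformly $UV^*$ if for every $\varepsilon>0$ there is $\delta>0$ with $\mathbf{O}_\delta(S)\hookrightarrow_*\mathbf{O}_\varepsilon(S)$. *)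

theory Defs
  imports "HOL-Analysis.Analysis"
begin

definition paracompact_space :: "'a topology \<Rightarrow> bool" where
  "paracompact_space X \<longleftrightarrow> Hausdorff_space X \<and>
     (\<forall>\<U>. (\<forall>U\<in>\<U>. openin X U) \<and> \<Union>\<U> = topspace X \<longrightarrow>
        (\<exists>\<V>. (\<forall>V\<in>\<V>. openin X V) \<and> \<Union>\<V> = topspace X \<and>
              (\<forall>V\<in>\<V>. \<exists>U\<in>\<U>. V \<subseteq> U) \<and> locally_finite_in X \<V>))"

definition nbhd :: "real \<Rightarrow> 'b::metric_space set \<Rightarrow> 'b set" ("\<^bold>O") where
  "nbhd e S = (\<Union>q\<in>S. ball q e)"

definition embedding_relation :: "('b set \<Rightarrow> 'b set \<Rightarrow> bool) \<Rightarrow> bool" where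
  "embedding_relation R \<longleftrightarrow> (\<forall>S T. R S T \<longrightarrow> S \<subseteq> T)"

definition monotone_embedding :: "('b set \<Rightarrow> 'b set \<Rightarrow> bool) \<Rightarrow> bool" where
  "monotone_embedding R \<longleftrightarrow> embedding_relation R \<and>
     (\<forall>A S T B. A \<subseteq> S \<and> R S T \<and> T \<subseteq> B \<longrightarrow> R A B)"

definition uniformly_UV :: "('b::metric_space set \<Rightarrow> 'b set \<Rightarrow> bool) \<Rightarrow> 'b set \<Rightarrow> bool" where
  "uniformly_UV R S \<longleftrightarrow> (\<forall>e>0. \<exists>d>0. R (nbhd d S) (nbhd e S))"

definition set_valued_on :: "'a topology \<Rightarrow> ('a \<Rightarrow> 'b set) \<Rightarrow> bool" where
  "set_valued_on X \<phi> \<longleftrightarrow> (\<forall>x\<in>topspace X. \<phi> x \<noteq> {})"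

definition rho_continuous :: "'a topology \<Rightarrow> ('a \<Rightarrow> 'b::metric_space set) \<Rightarrow> bool" where
  "rho_continuous X \<phi> \<longleftrightarrow> (\<forall>e>0. \<forall>x\<in>topspace X. \<exists>V. openin X V \<and> x \<in> V \<and>
     (\<forall>p\<in>V. \<phi> x \<subseteq> nbhd e (\<phi> p) \<and> \<phi> p \<subseteq> nbhd e (\<phi> x)))"

definition open_cover :: "'a topology \<Rightarrow> 'a set set \<Rightarrow> bool" where
  "open_cover X \<U> \<longleftrightarrow> (\<forall>U\<in>\<U>. openin X U \<and> U \<noteq> {}) \<and> \<Union>\<U> = topspace X"

end

theory Submission
  imports Defs
begin


lemma nbhd_mono: "a \<le> b \<Longrightarrow> S \<subseteq> T \<Longrightarrow> nbhd a S \<subseteq> nbhd b T"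
  unfolding nbhd_def by fastforce

lemma nbhd_nbhd: "nbhd a (nbhd b S) \<subseteq> nbhd (b + a) S"
proof
  fix x assume "x \<in> nbhd a (nbhd b S)"
  then obtain q p where "p \<in> S" "dist q p < b" "dist x q < a" unfolding nbhd_def
    by (auto simp: dist_commute)
  then have "dist x p < b + a" using dist_triangle[of x p q] by linarith
  then show "x \<in> nbhd (b + a) S" using \<open>p \<in> S\<close> unfolding nbhd_def by (auto simp: dist_commute)
qed

lemma subset_nbhd: "0 < a \<Longrightarrow> S \<subseteq> nbhd a S"
  unfolding nbhd_def by auto

lemma nbhd_ne: "0 < a \<Longrightarrow> S \<noteq> {} \<Longrightarrow> nbhd a S \<noteq> {}"
  using subset_nbhd by blast

lemma nbhd_shift: "S \<subseteq> nbhd a T \<Longrightarrow> nbhd b S \<subseteq> nbhd (a + b) T"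
  using nbhd_mono[of b b S "nbhd a T"] nbhd_nbhd[of b a T] by auto


locale tsetup =
  fixes X :: "'a topology"
    and R :: "'b::metric_space set \<Rightarrow> 'b set \<Rightarrow> bool"
    and \<phi> :: "'a \<Rightarrow> 'b set"
    and \<epsilon> :: "'a \<Rightarrow> real"
  assumes mono: "monotone_embedding R"
    and sv: "set_valued_on X \<phi>"
    and rc: "rho_continuous X \<phi>"
    and uv: "\<forall>x\<in>topspace X. uniformly_UV R (\<phi> x)"
    and ec: "continuous_map X euclideanreal \<epsilon>"
    and epos: "\<forall>x\<in>topspace X. \<epsilon> x > 0"
begin

lemma Rmono: "A \<subseteq> S \<Longrightarrow> R S T \<Longrightarrow> T \<subseteq> B \<Longrightarrow> R A B"
  using mono unfolding monotone_embedding_def by blast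

definition cl :: "real \<Rightarrow> 'a \<Rightarrow> 'a \<Rightarrow> bool" where
  "cl a x y \<longleftrightarrow> 0 < a \<and> \<phi> x \<subseteq> nbhd a (\<phi> y) \<and> \<phi> y \<subseteq> nbhd a (\<phi> x) \<and> \<bar>\<epsilon> x - \<epsilon> y\<bar> < a"

lemma cl_sym: "cl a x y \<Longrightarrow> cl a y x"
  unfolding cl_def by auto

lemma cl_refl: "0 < a \<Longrightarrow> cl a x x"
  unfolding cl_def using subset_nbhd by auto

lemma cl_pos: "cl a x y \<Longrightarrow> 0 < a"
  unfolding cl_def by auto

lemma cl_trans: assumes "cl a x y" "cl b y z" shows "cl (a + b) x z"
proof -
  have "\<phi> x \<subseteq> nbhd (b + a) (\<phi> z)"
    using assms nbhd_shift[of "\<phi> y" b "\<phi> z" a] unfolding cl_def by blast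
  moreover have "\<phi> z \<subseteq> nbhd (a + b) (\<phi> x)"
    using assms nbhd_shift[of "\<phi> y" a "\<phi> x" b] unfolding cl_def by blast
  ultimately show ?thesis using assms unfolding cl_def by (auto simp: add.commute)
qed

lemma cl_shift: "cl a x y \<Longrightarrow> nbhd b (\<phi> y) \<subseteq> nbhd (b + a) (\<phi> x)"
  using nbhd_shift[of "\<phi> y" a "\<phi> x" b] unfolding cl_def by (auto simp: add.commute)

lemma cl_eps: "cl a x y \<Longrightarrow> \<epsilon> x \<le> \<epsilon> y + a"
  unfolding cl_def by auto

definition B :: "real \<Rightarrow> 'a \<Rightarrow> 'a set" where
  "B r x = {p \<in> topspace X. \<exists>a<r. cl a x p}"

lemma B_center: "0 < r \<Longrightarrow> x \<in> topspace X \<Longrightarrow> x \<in> B r x"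
proof -
  assume r: "0 < r" and x: "x \<in> topspace X"
  have "cl (r/2) x x" using cl_refl r by simp
  moreover have "r/2 < r" using r by simp
  ultimately show ?thesis unfolding B_def using x by blast
qed

lemma B_open: "openin X (B r x)"
proof (subst openin_subopen, intro ballI)
  fix p assume p: "p \<in> B r x"
  then obtain a where a: "a < r" "cl a x p" "p \<in> topspace X" unfolding B_def by blast
  define e where "e = (r - a) / 2"
  have e: "0 < e" using a unfolding e_def by simp
  obtain V where V: "openin X V" "p \<in> V"
    "\<forall>q\<in>V. \<phi> p \<subseteq> nbhd e (\<phi> q) \<and> \<phi> q \<subseteq> nbhd e (\<phi> p)"
    using rc e a(3) unfolding rho_continuous_def by meson
  define W where "W = {q \<in> topspace X. \<epsilon> q \<in> ball (\<epsilon> p) e}"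
  have W: "openin X W" unfolding W_def
    using openin_continuous_map_preimage[OF ec, of "ball (\<epsilon> p) e"] by simp
  have "V \<inter> W \<subseteq> B r x"
  proof
    fix q assume q: "q \<in> V \<inter> W"
    then have "cl e p q"
    proof -
      have "\<phi> p \<subseteq> nbhd e (\<phi> q)" "\<phi> q \<subseteq> nbhd e (\<phi> p)" using V q by auto
      moreover have "\<bar>\<epsilon> p - \<epsilon> q\<bar> < e" using q unfolding W_def by (simp add: dist_real_def)
      ultimately show ?thesis using e unfolding cl_def by blast
    qed
    then have "cl (a + e) x q" using cl_trans a by blast
    moreover have "a + e < r" using a(1) unfolding e_def by (simp add: field_simps)
    ultimately show "q \<in> B r x" using q unfolding B_def W_def by auto
  qed
  moreover have "p \<in> V \<inter> W" using V a e unfolding W_def by auto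
  moreover have "openin X (V \<inter> W)" using V W by blast
  ultimately show "\<exists>T. openin X T \<and> p \<in> T \<and> T \<subseteq> B r x" by blast
qed

definition lip :: "('a \<Rightarrow> real) \<Rightarrow> bool" where
  "lip h \<longleftrightarrow> (\<forall>x\<in>topspace X. 0 < h x) \<and>
     (\<forall>x\<in>topspace X. \<forall>y\<in>topspace X. \<forall>a. cl a x y \<longrightarrow> h x \<le> h y + a)"

lemma regularize:
  assumes Gpos: "\<forall>x\<in>topspace X. 0 < G x"
    and loc: "\<forall>x\<in>topspace X. \<exists>r>0. \<exists>c>0. \<forall>p\<in>topspace X. \<forall>a. cl a x p \<and> a < r \<longrightarrow> c \<le> G p"
  shows "\<exists>h. lip h \<and> (\<forall>x\<in>topspace X. h x \<le> G x)"
proof -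
  define S where "S y = {G z + a | z a. z \<in> topspace X \<and> cl a y z}" for y
  define h where "h y = Inf (S y)" for y
  have bdd: "bdd_below (S y)" for y
  proof -
    have "0 \<le> v" if "v \<in> S y" for v
    proof -
      obtain z a where v: "v = G z + a" "z \<in> topspace X" "cl a y z" using \<open>v \<in> S y\<close> unfolding S_def by blast
      then show ?thesis using Gpos cl_pos[OF v(3)] by (metis add_pos_pos less_imp_le)
    qed
    then show ?thesis unfolding bdd_below_def by blast
  qed
  have ne: "S y \<noteq> {}" if "y \<in> topspace X" for y
    using that cl_refl[of 1 y, OF zero_less_one] unfolding S_def by blast
  have pos: "0 < h y" if y: "y \<in> topspace X" for y
  proof -
    obtain r c where rc: "r > 0" "c > 0"
      "\<forall>p\<in>topspace X. \<forall>a. cl a y p \<and> a < r \<longrightarrow> c \<le> G p"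
      using loc y by blast
    have "min r c \<le> h y" unfolding h_def
    proof (rule cInf_greatest[OF ne[OF y]])
      fix v assume "v \<in> S y"
      then obtain z a where v: "v = G z + a" "z \<in> topspace X" "cl a y z" unfolding S_def by blast
      have "0 < a" using v cl_pos by blast
      show "min r c \<le> v"
      proof (cases "a < r")
        case True then have "c \<le> G z" using rc v by blast
        moreover have "min r c \<le> c" by simp
        ultimately show ?thesis using v \<open>0<a\<close> by linarith
      next
        case False then have "0 < G z" using Gpos v by blast
        moreover have "min r c \<le> r" by simp
        ultimately show ?thesis using v False by linarith
      qed
    qed
    moreover have "0 < min r c" using rc by simp
    ultimately show ?thesis by linarith
  qed
  have le: "h y \<le> G y" if y: "y \<in> topspace X" for y
  proof (rule field_le_epsilon)
    fix e :: real assume "0 < e"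
    then have "G y + e \<in> S y" using cl_refl[of e y] y unfolding S_def by blast
    then show "h y \<le> G y + e" unfolding h_def by (rule cInf_lower[OF _ bdd])
  qed
  have lipc: "h x \<le> h y + b" if xy: "x \<in> topspace X" "y \<in> topspace X" "cl b x y" for x y b
  proof -
    have "h x - b \<le> h y" unfolding h_def
    proof (rule cInf_greatest[OF ne[OF xy(2)]])
      fix v assume "v \<in> S y"
      then obtain z a where v: "v = G z + a" "z \<in> topspace X" "cl a y z" unfolding S_def by blast
      have "cl (b + a) x z" using cl_trans xy v by blast
      then have "G z + (b + a) \<in> S x" using v unfolding S_def by blast
      then have "Inf (S x) \<le> G z + (b + a)" by (rule cInf_lower[OF _ bdd])
      then show "Inf (S x) - b \<le> v" using v by linarith
    qed
    then show ?thesis by linarith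
  qed
  show ?thesis unfolding lip_def using pos le lipc by blast
qed


lemma lipD: "lip h \<Longrightarrow> x \<in> topspace X \<Longrightarrow> y \<in> topspace X \<Longrightarrow> cl a x y \<Longrightarrow> h x \<le> h y + a"
  unfolding lip_def by blast

lemma lip_pos: "lip h \<Longrightarrow> x \<in> topspace X \<Longrightarrow> 0 < h x"
  unfolding lip_def by blast

lemma uvlip:
  assumes s: "lip s"
  shows "\<exists>t. lip t \<and> (\<forall>x\<in>topspace X. t x \<le> s x / 4 \<and> R (nbhd (t x) (\<phi> x)) (nbhd (s x) (\<phi> x)))"
proof -
  define P where "P y c \<longleftrightarrow> 0 < c \<and> c \<le> s y / 4 \<and> R (nbhd c (\<phi> y)) (nbhd (s y) (\<phi> y))" for y c
  have down: "P y c'" if "P y c" "0 < c'" "c' \<le> c" for y c c'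
  proof -
    have "nbhd c' (\<phi> y) \<subseteq> nbhd c (\<phi> y)" using nbhd_mono[OF that(3) order_refl] .
    then show ?thesis using that Rmono[of "nbhd c' (\<phi> y)" "nbhd c (\<phi> y)"] unfolding P_def by auto
  qed
  have loc: "\<exists>r>0. \<exists>c>0. \<forall>p\<in>topspace X. \<forall>a. cl a x p \<and> a < r \<longrightarrow> P p c" if x: "x \<in> topspace X" for x
  proof -
    have sx: "0 < s x" using lip_pos[OF s x] .
    then have "0 < s x / 2" by simp
    then obtain \<delta> where d: "0 < \<delta>" "R (nbhd \<delta> (\<phi> x)) (nbhd (s x / 2) (\<phi> x))"
      using uv x unfolding uniformly_UV_def by blast
    define c0 where "c0 = min \<delta> (s x / 8)"
    have c0: "0 < c0" "c0 \<le> \<delta>" "c0 \<le> s x / 8" using d sx unfolding c0_def by auto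
    have "\<forall>p\<in>topspace X. \<forall>a. cl a x p \<and> a < c0/2 \<longrightarrow> P p (c0/2)"
    proof (intro ballI allI impI)
      fix p a assume p: "p \<in> topspace X" and pa: "cl a x p \<and> a < c0/2"
      have a0: "0 < a" using pa cl_pos by blast
      have sp: "s x \<le> s p + a" using lipD[OF s x p] pa by blast
      have "nbhd (c0/2) (\<phi> p) \<subseteq> nbhd (c0/2 + a) (\<phi> x)" using cl_shift pa by blast
      also have "\<dots> \<subseteq> nbhd \<delta> (\<phi> x)"
        by (rule nbhd_mono) (use pa c0 in linarith, simp)
      finally have 1: "nbhd (c0/2) (\<phi> p) \<subseteq> nbhd \<delta> (\<phi> x)" .
      have "nbhd (s x / 2) (\<phi> x) \<subseteq> nbhd (s x / 2 + a) (\<phi> p)" using cl_shift cl_sym pa by blast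
      also have "\<dots> \<subseteq> nbhd (s p) (\<phi> p)"
        by (rule nbhd_mono) (use pa c0 sp in linarith, simp)
      finally have 2: "nbhd (s x / 2) (\<phi> x) \<subseteq> nbhd (s p) (\<phi> p)" .
      have "R (nbhd (c0/2) (\<phi> p)) (nbhd (s p) (\<phi> p))" using Rmono[OF 1 d(2) 2] .
      moreover have "c0/2 \<le> s p / 4" using sp pa c0 by linarith
      ultimately show "P p (c0/2)" using c0 unfolding P_def by simp
    qed
    moreover have "0 < c0/2" using c0 by simp
    ultimately show ?thesis by blast
  qed
  define G where "G y = Sup {c. P y c}" for y
  have bdd: "bdd_above {c. P y c}" for y
    unfolding bdd_above_def P_def by (intro exI[of _ "s y / 4"]) simp
  have ne: "{c. P y c} \<noteq> {}" if y: "y \<in> topspace X" for y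
  proof -
    obtain r c where rc: "r > 0" "c > 0" "\<forall>p\<in>topspace X. \<forall>a. cl a y p \<and> a < r \<longrightarrow> P p c"
      using loc[OF y] by blast
    have "cl (r/2) y y" using cl_refl rc by simp
    moreover have "r/2 < r" using rc by simp
    ultimately have "P y c" using rc y by blast
    then show ?thesis by blast
  qed
  have Gpos: "0 < G y" if y: "y \<in> topspace X" for y
  proof -
    obtain c where c: "P y c" using ne[OF y] by blast
    have "c \<le> G y" unfolding G_def by (rule cSup_upper[OF _ bdd]) (use c in simp)
    then show ?thesis using c unfolding P_def by linarith
  qed
  have PG: "P y (G y / 2)" if y: "y \<in> topspace X" for y
  proof -
    have "G y / 2 < G y" using Gpos[OF y] by simp
    then obtain c where c: "P y c" "G y / 2 < c" unfolding G_def
      using less_cSup_iff[OF ne[OF y] bdd] by auto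
    show ?thesis by (rule down[OF c(1)]) (use Gpos[OF y] c in auto)
  qed
  have "\<exists>h. lip h \<and> (\<forall>x\<in>topspace X. h x \<le> G x / 2)"
  proof (rule regularize)
    show "\<forall>x\<in>topspace X. 0 < G x / 2" using Gpos by simp
    show "\<forall>x\<in>topspace X. \<exists>r>0. \<exists>c>0. \<forall>p\<in>topspace X. \<forall>a. cl a x p \<and> a < r \<longrightarrow> c \<le> G p / 2"
    proof
      fix x assume x: "x \<in> topspace X"
      obtain r c where rc: "r > 0" "c > 0" "\<forall>p\<in>topspace X. \<forall>a. cl a x p \<and> a < r \<longrightarrow> P p c"
        using loc[OF x] by blast
      have "\<forall>p\<in>topspace X. \<forall>a. cl a x p \<and> a < r \<longrightarrow> c / 2 \<le> G p / 2"
      proof (intro ballI allI impI)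
        fix p a assume "p \<in> topspace X" "cl a x p \<and> a < r"
        then have "P p c" using rc by blast
        then have "c \<le> G p" unfolding G_def by (intro cSup_upper[OF _ bdd]) simp
        then show "c / 2 \<le> G p / 2" by simp
      qed
      then show "\<exists>r>0. \<exists>c>0. \<forall>p\<in>topspace X. \<forall>a. cl a x p \<and> a < r \<longrightarrow> c \<le> G p / 2"
        using rc(1) \<open>0 < c\<close> half_gt_zero[of c] by blast
    qed
  qed
  then obtain h where h: "lip h" "\<forall>x\<in>topspace X. h x \<le> G x / 2" by blast
  have "P x (h x)" if x: "x \<in> topspace X" for x
    by (rule down[OF PG[OF x]]) (use h x lip_pos in auto)
  then show ?thesis using h unfolding P_def by blast
qed

lemma lip_scale: "lip t \<Longrightarrow> lip (\<lambda>x. t x / 4)"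
  unfolding lip_def
proof (intro conjI ballI allI impI)
  fix x assume "(\<forall>x\<in>topspace X. 0 < t x) \<and> (\<forall>x\<in>topspace X. \<forall>y\<in>topspace X. \<forall>a. cl a x y \<longrightarrow> t x \<le> t y + a)"
    "x \<in> topspace X"
  then show "0 < t x / 4" by simp
next
  fix x y a assume H: "(\<forall>x\<in>topspace X. 0 < t x) \<and> (\<forall>x\<in>topspace X. \<forall>y\<in>topspace X. \<forall>a. cl a x y \<longrightarrow> t x \<le> t y + a)"
    "x \<in> topspace X" "y \<in> topspace X" "cl a x y"
  then have "t x \<le> t y + a" by blast
  moreover have "0 < a" using H cl_pos by blast
  ultimately show "t x / 4 \<le> t y / 4 + a" by linarith
qed

lemma lip_eps: "lip (\<lambda>x. \<epsilon> x / 2)"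
  unfolding lip_def
proof (intro conjI ballI allI impI)
  fix x assume "x \<in> topspace X" then show "0 < \<epsilon> x / 2" using epos by simp
next
  fix x y a assume H: "x \<in> topspace X" "y \<in> topspace X" "cl a x y"
  then have "\<epsilon> x \<le> \<epsilon> y + a" using cl_eps by blast
  moreover have "0 < a" using H cl_pos by blast
  ultimately show "\<epsilon> x / 2 \<le> \<epsilon> y / 2 + a" by linarith
qed

lemma main:
  "\<exists>(\<U> :: nat \<Rightarrow> 'a set set) (\<Phi> :: nat \<Rightarrow> 'a set \<Rightarrow> 'b set) (\<Psi> :: nat \<Rightarrow> 'a set \<Rightarrow> 'b set).
           (\<forall>n. open_cover X (\<U> n) \<and>
                (\<forall>U\<in>\<U> n. \<Phi> n U \<noteq> {} \<and> \<Psi> n U \<noteq> {})) \<and>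
           (\<forall>n. \<forall>U\<in>\<U> n.
                R (\<Phi> n U) (\<Psi> n U) \<and> (\<forall>p\<in>U. \<Psi> n U \<subseteq> nbhd (\<epsilon> p) (\<phi> p))) \<and>
           (\<forall>n k. \<forall>U\<in>\<U> n. \<forall>V\<in>\<U> k. k > n \<and> V \<inter> U \<noteq> {} \<longrightarrow> \<Psi> k V \<subseteq> \<Phi> n U)"
proof -
  define T where "T s = (SOME t. lip t \<and> (\<forall>x\<in>topspace X. t x \<le> s x / 4 \<and> R (nbhd (t x) (\<phi> x)) (nbhd (s x) (\<phi> x))))" for s
  have T: "lip (T s) \<and> (\<forall>x\<in>topspace X. T s x \<le> s x / 4 \<and> R (nbhd (T s x) (\<phi> x)) (nbhd (s x) (\<phi> x)))"
    if "lip s" for s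
    unfolding T_def by (rule someI_ex[OF uvlip[OF that]])
  define S :: "nat \<Rightarrow> 'a \<Rightarrow> real" where "S n = rec_nat (\<lambda>x. \<epsilon> x / 2) (\<lambda>_ s. \<lambda>x. T s x / 4) n" for n
  have S0: "S 0 = (\<lambda>x. \<epsilon> x / 2)" by (simp add: S_def)
  have SS: "S (Suc n) = (\<lambda>x. T (S n) x / 4)" for n by (simp add: S_def)
  have lipS: "lip (S n)" for n
  proof (induction n)
    case 0 show ?case using lip_eps S0 by simp
  next
    case (Suc n) show ?case unfolding SS using lip_scale T[OF Suc] by blast
  qed
  define t where "t n = T (S n)" for n
  have lipt: "lip (t n)" for n using T[OF lipS] unfolding t_def by blast
  have tS: "t n x \<le> S n x / 4" if "x \<in> topspace X" for n x using T[OF lipS] that unfolding t_def by blast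
  have tR: "R (nbhd (t n x) (\<phi> x)) (nbhd (S n x) (\<phi> x))" if "x \<in> topspace X" for n x
    using T[OF lipS] that unfolding t_def by blast
  have Spos: "0 < S n x" if "x \<in> topspace X" for n x using lip_pos[OF lipS that] .
  have tpos: "0 < t n x" if "x \<in> topspace X" for n x using lip_pos[OF lipt that] .
  have Sdec: "S (Suc n) x \<le> S n x" if "x \<in> topspace X" for n x
    using tS[OF that, of n] Spos[OF that, of n] unfolding SS t_def by simp
  have Seps: "S n x \<le> \<epsilon> x / 2" if x: "x \<in> topspace X" for n x
  proof (induction n)
    case 0 show ?case using S0 by simp
  next
    case (Suc n) then show ?case using Sdec[OF x, of n] by linarith
  qed
  have Sk: "S k x \<le> t n x / 4" if x: "x \<in> topspace X" and k: "Suc n \<le> k" for n k x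
    using k
  proof (induction k rule: dec_induct)
    case base show ?case unfolding SS t_def by simp
  next
    case (step m) then show ?case using Sdec[OF x, of m] by linarith
  qed
  define ball where "ball n x = B (t n x / 8) x" for n x
  define Uc where "Uc n = ball n ` topspace X" for n
  define rep where "rep n U = (SOME x. x \<in> topspace X \<and> U = ball n x)" for n U
  have rep: "rep n U \<in> topspace X \<and> U = ball n (rep n U)" if "U \<in> Uc n" for n U
  proof -
    have "\<exists>x. x \<in> topspace X \<and> U = ball n x" using that unfolding Uc_def by blast
    then show ?thesis unfolding rep_def by (rule someI_ex)
  qed
  define Phi where "Phi n U = nbhd (t n (rep n U)) (\<phi> (rep n U))" for n U
  define Psi where "Psi n U = nbhd (S n (rep n U)) (\<phi> (rep n U))" for n U
  have inball: "\<exists>a. a < t n x / 8 \<and> cl a x p \<and> p \<in> topspace X" if "p \<in> ball n x" for n x p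
    using that unfolding ball_def B_def by blast
  have phine: "\<phi> x \<noteq> {}" if "x \<in> topspace X" for x using sv that unfolding set_valued_on_def by blast
  have part1: "open_cover X (Uc n) \<and> (\<forall>U\<in>Uc n. Phi n U \<noteq> {} \<and> Psi n U \<noteq> {})" for n
  proof (intro conjI ballI)
    show "open_cover X (Uc n)" unfolding open_cover_def
    proof (intro conjI ballI)
      fix U assume "U \<in> Uc n"
      then obtain x where x: "x \<in> topspace X" "U = ball n x" unfolding Uc_def by blast
      show "openin X U" using x B_open unfolding ball_def by simp
      have "x \<in> U" using x B_center[of "t n x / 8" x] tpos[OF x(1)] unfolding ball_def by simp
      then show "U \<noteq> {}" by blast
    next
      show "\<Union> (Uc n) = topspace X"
      proof
        show "\<Union> (Uc n) \<subseteq> topspace X" unfolding Uc_def ball_def B_def by blast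
        show "topspace X \<subseteq> \<Union> (Uc n)"
        proof
          fix x assume x: "x \<in> topspace X"
          then have "x \<in> ball n x" using B_center[of "t n x / 8" x] tpos[OF x] unfolding ball_def by simp
          then show "x \<in> \<Union> (Uc n)" using x unfolding Uc_def by blast
        qed
      qed
    qed
  next
    fix U assume "U \<in> Uc n"
    then have x: "rep n U \<in> topspace X" using rep by blast
    show "Phi n U \<noteq> {}" unfolding Phi_def using nbhd_ne tpos[OF x] phine[OF x] by blast
    show "Psi n U \<noteq> {}" unfolding Psi_def using nbhd_ne Spos[OF x] phine[OF x] by blast
  qed
  have part2: "R (Phi n U) (Psi n U) \<and> (\<forall>p\<in>U. Psi n U \<subseteq> nbhd (\<epsilon> p) (\<phi> p))" if U: "U \<in> Uc n" for n U
  proof (intro conjI ballI)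
    define x where "x = rep n U"
    have x: "x \<in> topspace X" "U = ball n x" using rep[OF U] unfolding x_def by auto
    show "R (Phi n U) (Psi n U)" unfolding Phi_def Psi_def x_def[symmetric] using tR[OF x(1)] .
    fix p assume "p \<in> U"
    then obtain a where a: "a < t n x / 8" "cl a x p" "p \<in> topspace X" using inball x by blast
    have "Psi n U \<subseteq> nbhd (S n x + a) (\<phi> p)" unfolding Psi_def x_def[symmetric]
      using cl_shift cl_sym a by blast
    also have "\<dots> \<subseteq> nbhd (\<epsilon> p) (\<phi> p)"
    proof (rule nbhd_mono)
      have "\<epsilon> x \<le> \<epsilon> p + a" using cl_eps a by blast
      moreover have "S n x \<le> \<epsilon> x / 2" using Seps[OF x(1)] .
      moreover have "t n x \<le> S n x / 4" using tS[OF x(1)] .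
      moreover have "0 < S n x" using Spos[OF x(1)] .
      ultimately show "S n x + a \<le> \<epsilon> p" using a(1) by linarith
    qed simp
    finally show "Psi n U \<subseteq> nbhd (\<epsilon> p) (\<phi> p)" .
  qed
  have part3: "Psi k V \<subseteq> Phi n U"
    if U: "U \<in> Uc n" and V: "V \<in> Uc k" and kn: "k > n" and ne: "V \<inter> U \<noteq> {}" for n k U V
  proof -
    define x where "x = rep n U"
    define y where "y = rep k V"
    have x: "x \<in> topspace X" "U = ball n x" using rep[OF U] unfolding x_def by auto
    have y: "y \<in> topspace X" "V = ball k y" using rep[OF V] unfolding y_def by auto
    obtain z where z: "z \<in> V" "z \<in> U" using ne by blast
    obtain a where a: "a < t n x / 8" "cl a x z" "z \<in> topspace X" using inball x z by blast
    obtain b where b: "b < t k y / 8" "cl b y z" "z \<in> topspace X" using inball y z by blast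
    have cxy: "cl (a + b) x y" using cl_trans[OF a(2) cl_sym[OF b(2)]] .
    have "Psi k V \<subseteq> nbhd (S k y + (a + b)) (\<phi> x)" unfolding Psi_def y_def[symmetric]
      using cl_shift[OF cxy] .
    also have "\<dots> \<subseteq> Phi n U" unfolding Phi_def x_def[symmetric]
    proof (rule nbhd_mono)
      have 1: "t n y \<le> t n x + (a + b)" using lipD[OF lipt y(1) x(1) cl_sym[OF cxy]] .
      have 2: "S k y \<le> t n y / 4" using Sk[OF y(1)] kn by simp
      have 3: "t k y \<le> S k y / 4" using tS[OF y(1)] .
      have 4: "0 < t n x" using tpos[OF x(1)] .
      have 5: "0 < a" "0 < b" using a b cl_pos by blast+
      show "S k y + (a + b) \<le> t n x" using 1 2 3 4 5 a(1) b(1) by linarith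
    qed simp
    finally show ?thesis .
  qed
  show ?thesis
    apply (rule exI[of _ Uc], rule exI[of _ Phi], rule exI[of _ Psi])
    using part1 part2 part3 by blast
qed
end

theorem theorem2p1:
  fixes X :: "'a topology"
    and R :: "'b::metric_space set \<Rightarrow> 'b set \<Rightarrow> bool"
    and \<phi> :: "'a \<Rightarrow> 'b set"
    and \<epsilon> :: "'a \<Rightarrow> real"
  assumes "monotone_embedding R"
    and "paracompact_space X"
    and "set_valued_on X \<phi>"
    and "rho_continuous X \<phi>"
    and "\<forall>x\<in>topspace X. uniformly_UV R (\<phi> x)"
    and "continuous_map X euclideanreal \<epsilon>"
    and "\<forall>x\<in>topspace X. \<epsilon> x > 0"
  shows "\<exists>(\<U> :: nat \<Rightarrow> 'a set set) (\<Phi> :: nat \<Rightarrow> 'a set \<Rightarrow> 'b set) (\<Psi> :: nat \<Rightarrow> 'a set \<Rightarrow> 'b set).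
           (\<forall>n. open_cover X (\<U> n) \<and>
                (\<forall>U\<in>\<U> n. \<Phi> n U \<noteq> {} \<and> \<Psi> n U \<noteq> {})) \<and>
           (\<forall>n. \<forall>U\<in>\<U> n.
                R (\<Phi> n U) (\<Psi> n U) \<and> (\<forall>p\<in>U. \<Psi> n U \<subseteq> nbhd (\<epsilon> p) (\<phi> p))) \<and>
           (\<forall>n k. \<forall>U\<in>\<U> n. \<forall>V\<in>\<U> k. k > n \<and> V \<inter> U \<noteq> {} \<longrightarrow> \<Psi> k V \<subseteq> \<Phi> n U)"
proof -
  interpret tsetup X R \<phi> \<epsilon> using assms by unfold_locales auto
  show ?thesis by (rule main)
qed

end
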